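(* Let $\mathcal V$ be an operator space and $\mathcal D'\subseteq\mathcal D$ an inclusion of noncommutative domains in $\mathcal V_{\rm nc}$ ($\mathcal D'_n\subseteq\mathcal D_n$ for all $n$). Assume (1) $M:=\sup_{n\in\mathbb N}\sup_{x\in\mathcal D'_n}\|x\|<+\infty$ and (2) $m:=\inf_{n\in\mathbb N}\inf\{\|x-w\|\colon x\in\mathcal D'_n,\ w\in\mathcal V^{n\times n}\setminus\mathcal D_n\}>0$. Then there exists a constant $k\in[0,1)$ such that $k\,\tilde\delta_{\mathcal D'}(a,c)\ge\tilde\delta_{\mathcal D}(a,c)$ for all $n$ and all $a,c\in\mathcal D'_n$.
   Context: A noncommutative domain is a family $\mathcal D=(\mathcal D_n)$ of open sets $\mathcal D_n\subseteq\mathcal V^{n\times n}$ (with the operator-space norms) closed under direct sums. For $a\in\mathcal D_n,c\in\mathcal D_m,b\in\mathcal V^{n\times m}$, $\delta_{\mathcal D}(a,c)(b)=\big[\sup\{t\in[0,+\infty]\colon\begin{bmatrix}a&sb\\0&c\end{bmatrix}\in\mathcal D_{n+m}\ \forall s\in[0,t]\}\big]^{-1}$ ($1/0=+\infty,1/\infty=0$), and $\tilde\delta_{\mathcal D}(a,c)=\delta_{\mathcal D}(a,c)(a-c)$ for $a,c\in\mathcal D_n$. *)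

theory Defs
  imports "HOL-Analysis.Analysis"
begin

text \<open>Matrices over a complex vector space V are represented as functions
  nat => nat => V; the n x m matrices are those vanishing outside the
  index range {0..<n} x {0..<m}.\<close>

type_synonym 'v vmat = "nat \<Rightarrow> nat \<Rightarrow> 'v"

definition vmats :: "nat \<Rightarrow> nat \<Rightarrow> ('v::zero) vmat set" where
  "vmats n m = {x. \<forall>i j. (n \<le> i \<or> m \<le> j) \<longrightarrow> x i j = 0}"

text \<open>Isabelle's distribution has no class of complex vector spaces; a complex
  vector space is represented as a real vector space 'v with a complex structure J
  (an R-linear map with J (J v) = -v), the complex scalar action being
  c * v = Re c v + Im c J v.\<close>
definition complex_structure :: "('v::real_vector \<Rightarrow> 'v) \<Rightarrow> bool" where
  "complex_structure J \<longleftrightarrow> linear J \<and> (\<forall>v. J (J v) = - v)"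

definition cscale :: "('v::real_vector \<Rightarrow> 'v) \<Rightarrow> complex \<Rightarrow> 'v \<Rightarrow> 'v" where
  "cscale J c v = Re c *\<^sub>R v + Im c *\<^sub>R J v"

definition cmat_norm :: "nat \<Rightarrow> (nat \<Rightarrow> nat \<Rightarrow> complex) \<Rightarrow> real" where
  "cmat_norm n \<alpha> = Sup {sqrt (\<Sum>i<n. (cmod (\<Sum>j<n. \<alpha> i j * v j))\<^sup>2) | v.
                         (\<Sum>j<n. (cmod (v j))\<^sup>2) \<le> 1}"

definition cmul :: "('v \<Rightarrow> 'v) \<Rightarrow> nat \<Rightarrow> (nat \<Rightarrow> nat \<Rightarrow> complex) \<Rightarrow> ('v::real_vector) vmat
                     \<Rightarrow> (nat \<Rightarrow> nat \<Rightarrow> complex) \<Rightarrow> 'v vmat" where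
  "cmul J n \<alpha> x \<beta> = (\<lambda>i j. if i < n \<and> j < n
      then (\<Sum>k<n. \<Sum>l<n. cscale J (\<alpha> i k * \<beta> l j) (x k l)) else 0)"

definition blk :: "nat \<Rightarrow> nat \<Rightarrow> ('v::zero) vmat \<Rightarrow> 'v vmat \<Rightarrow> 'v vmat \<Rightarrow> 'v vmat" where
  "blk n m a b c = (\<lambda>i j.
      if i < n \<and> j < n then a i j
      else if i < n \<and> n \<le> j \<and> j < n + m then b i (j - n)
      else if n \<le> i \<and> i < n + m \<and> n \<le> j \<and> j < n + m then c (i - n) (j - n)
      else 0)"

definition dsum :: "nat \<Rightarrow> nat \<Rightarrow> ('v::zero) vmat \<Rightarrow> 'v vmat \<Rightarrow> 'v vmat" where
  "dsum n m x y = blk n m x (\<lambda>_ _. 0) y"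

definition operator_space :: "('v::real_vector \<Rightarrow> 'v) \<Rightarrow> (nat \<Rightarrow> ('v::real_vector) vmat \<Rightarrow> real) \<Rightarrow> bool" where
  "operator_space J nm \<longleftrightarrow>
     complex_structure J \<and>
     (\<forall>n\<ge>1. \<forall>x\<in>vmats n n. \<forall>y\<in>vmats n n. \<forall>c::complex.
        0 \<le> nm n x \<and> (nm n x = 0 \<longleftrightarrow> x = (\<lambda>_ _. 0))
        \<and> nm n (\<lambda>i j. x i j + y i j) \<le> nm n x + nm n y
        \<and> nm n (\<lambda>i j. cscale J c (x i j)) = cmod c * nm n x)
   \<and> (\<forall>n\<ge>1. \<forall>x\<in>vmats n n. \<forall>\<alpha> \<beta>.
        nm n (cmul J n \<alpha> x \<beta>) \<le> cmat_norm n \<alpha> * nm n x * cmat_norm n \<beta>)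
   \<and> (\<forall>n\<ge>1. \<forall>m\<ge>1. \<forall>x\<in>vmats n n. \<forall>y\<in>vmats m m.
        nm (n + m) (dsum n m x y) = max (nm n x) (nm m y))"

definition nc_domain :: "(nat \<Rightarrow> ('v::real_vector) vmat \<Rightarrow> real) \<Rightarrow> (nat \<Rightarrow> 'v vmat set) \<Rightarrow> bool" where
  "nc_domain nm D \<longleftrightarrow>
     (\<forall>n\<ge>1. D n \<subseteq> vmats n n \<and>
        (\<forall>x\<in>D n. \<exists>e>0. \<forall>y\<in>vmats n n. nm n (\<lambda>i j. y i j - x i j) < e \<longrightarrow> y \<in> D n))
   \<and> (\<forall>n\<ge>1. \<forall>m\<ge>1. \<forall>x\<in>D n. \<forall>y\<in>D m. dsum n m x y \<in> D (n + m))"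

definition nc_delta :: "(nat \<Rightarrow> ('v::real_vector) vmat set) \<Rightarrow> nat \<Rightarrow> nat
                         \<Rightarrow> 'v vmat \<Rightarrow> 'v vmat \<Rightarrow> 'v vmat \<Rightarrow> ereal" where
  "nc_delta D n m a c b =
     (let S = Sup {t::ereal. 0 \<le> t \<and>
                 (\<forall>s::real. 0 \<le> s \<and> ereal s \<le> t \<longrightarrow>
                    blk n m a (\<lambda>i j. s *\<^sub>R b i j) c \<in> D (n + m))}
      in if S = 0 then \<infinity> else if S = \<infinity> then 0 else ereal (1 / real_of_ereal S))"

definition nc_delta_tilde :: "(nat \<Rightarrow> ('v::real_vector) vmat set) \<Rightarrow> nat
                               \<Rightarrow> 'v vmat \<Rightarrow> 'v vmat \<Rightarrow> ereal" where
  "nc_delta_tilde D n a c = nc_delta D n n a c (\<lambda>i j. a i j - c i j)"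

end

theory Submission
  imports Defs
begin

lemma os_scale:
  assumes op: "operator_space J nm" and n: "n \<ge> 1" and x: "x \<in> vmats n n"
  shows "nm n (\<lambda>i j. r *\<^sub>R x i j) = \<bar>r\<bar> * nm n x"
proof -
  have "nm n (\<lambda>i j. cscale J (complex_of_real r) (x i j)) = cmod (complex_of_real r) * nm n x"
    using op n x unfolding operator_space_def by blast
  moreover have "(\<lambda>i j. cscale J (complex_of_real r) (x i j)) = (\<lambda>i j. r *\<^sub>R x i j)"
    by (simp add: cscale_def)
  ultimately show ?thesis by simp
qed

lemma os_diff:
  assumes op: "operator_space J nm" and n: "n \<ge> 1" and x: "x \<in> vmats n n" and y: "y \<in> vmats n n"
  shows "nm n (\<lambda>i j. x i j - y i j) \<le> nm n x + nm n y"
proof -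
  define z where "z = (\<lambda>i j. (-1) *\<^sub>R y i j)"
  have y': "z \<in> vmats n n" using y by (simp add: vmats_def z_def)
  have tri: "\<forall>n\<ge>1. \<forall>x\<in>vmats n n. \<forall>y\<in>vmats n n. nm n (\<lambda>i j. x i j + y i j) \<le> nm n x + nm n y"
    using op unfolding operator_space_def by blast
  have "nm n (\<lambda>i j. x i j + z i j) \<le> nm n x + nm n z"
    using tri n x y' by blast
  moreover have "nm n z = nm n y" using os_scale[OF op n y, of "-1"] by (simp add: z_def)
  moreover have "(\<lambda>i j. x i j + z i j) = (\<lambda>i j. x i j - y i j)" by (simp add: z_def)
  ultimately show ?thesis by simp
qed

lemma half_aux: "(x::real) < y \<Longrightarrow> x + (y - x)/2 < y"
  by (simp add: field_simps)

lemma os_nonneg: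
  assumes op: "operator_space J nm" and n: "n \<ge> 1" and x: "x \<in> vmats n n"
  shows "0 \<le> nm n x"
  using op n x unfolding operator_space_def by blast

lemma main_step:
  fixes J :: "'v::real_vector \<Rightarrow> 'v"
    and nm :: "nat \<Rightarrow> 'v vmat \<Rightarrow> real"
    and D D' :: "nat \<Rightarrow> 'v vmat set"
  assumes op: "operator_space J nm"
    and dD: "nc_domain nm D" and dD': "nc_domain nm D'"
    and sub: "\<forall>n\<ge>1. D' n \<subseteq> D n"
    and hM: "\<forall>n\<ge>1. \<forall>x\<in>D' n. nm n x \<le> M" and Mpos: "M > 0"
    and mu: "\<mu> > 0"
    and hmu: "\<forall>n\<ge>1. \<forall>x\<in>D' n. \<forall>w\<in>vmats n n - D n. \<mu> \<le> nm n (\<lambda>i j. x i j - w i j)"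
    and n: "n \<ge> 1" and a: "a \<in> D' n" and c: "c \<in> D' n"
  shows "ereal (2*M/(2*M+\<mu>)) * nc_delta_tilde D' n a c \<ge> nc_delta_tilde D n a c"
proof -
  let ?N = "nm (n+n)"
  define b where "b = (\<lambda>i j. a i j - c i j)"
  define P where "P = (\<lambda>s::real. blk n n a (\<lambda>i j. s *\<^sub>R b i j) c)"
  define Bm where "Bm = blk n n (\<lambda>_ _. 0) b (\<lambda>_ _. 0)"
  have n2: "n + n \<ge> 1" using n by simp
  have avm: "a \<in> vmats n n" using dD' n a unfolding nc_domain_def by blast
  have cvm: "c \<in> vmats n n" using dD' n c unfolding nc_domain_def by blast
  have Pvm: "\<And>s. P s \<in> vmats (n+n) (n+n)" unfolding P_def blk_def vmats_def by auto
  have Bvm: "Bm \<in> vmats (n+n) (n+n)" unfolding Bm_def blk_def vmats_def by auto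
  have Pdiff: "\<And>s t. (\<lambda>i j. P t i j - P s i j) = (\<lambda>i j. (t - s) *\<^sub>R Bm i j)"
    unfolding P_def Bm_def blk_def by (auto simp: fun_eq_iff scaleR_diff_left)
  have "P 0 = dsum n n a c" unfolding P_def dsum_def by simp
  moreover have "\<forall>n\<ge>1. \<forall>m\<ge>1. \<forall>x\<in>D' n. \<forall>y\<in>D' m. dsum n m x y \<in> D' (n + m)"
    using dD' unfolding nc_domain_def by blast
  ultimately have P0: "P 0 \<in> D' (n+n)" using n a c by simp
  have Ndist: "\<And>s t. ?N (\<lambda>i j. P t i j - P s i j) = \<bar>t - s\<bar> * ?N Bm"
    using Pdiff os_scale[OF op n2 Bvm] by simp
  define \<beta> where "\<beta> = ?N Bm"
  have bnn: "\<beta> \<ge> 0" unfolding \<beta>_def using os_nonneg[OF op n2 Bvm] .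
  obtain \<epsilon> where ep: "\<epsilon> > 0" and hep: "\<forall>y\<in>vmats (n+n) (n+n). ?N (\<lambda>i j. y i j - P 0 i j) < \<epsilon> \<longrightarrow> y \<in> D' (n+n)"
    using dD' P0 n2 unfolding nc_domain_def by meson
  define e where "e = \<epsilon> / (\<beta> + 1)"
  have epos: "e > 0" unfolding e_def using ep bnn by simp
  have eb: "e * \<beta> < \<epsilon>"
  proof -
    have "e * \<beta> = \<epsilon> * (\<beta> / (\<beta>+1))" unfolding e_def by simp
    also have "\<dots> < \<epsilon> * 1" using ep bnn by (intro mult_strict_left_mono) auto
    finally show ?thesis by simp
  qed
  define A' where "A' = {t::ereal. 0 \<le> t \<and> (\<forall>s::real. 0 \<le> s \<and> ereal s \<le> t \<longrightarrow> P s \<in> D' (n+n))}"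
  define A where "A = {t::ereal. 0 \<le> t \<and> (\<forall>s::real. 0 \<le> s \<and> ereal s \<le> t \<longrightarrow> P s \<in> D (n+n))}"
  have dt': "nc_delta_tilde D' n a c = (if Sup A' = 0 then \<infinity> else if Sup A' = \<infinity> then 0 else ereal (1 / real_of_ereal (Sup A')))"
    unfolding nc_delta_tilde_def nc_delta_def A'_def P_def b_def Let_def by simp
  have dt: "nc_delta_tilde D n a c = (if Sup A = 0 then \<infinity> else if Sup A = \<infinity> then 0 else ereal (1 / real_of_ereal (Sup A)))"
    unfolding nc_delta_tilde_def nc_delta_def A_def P_def b_def Let_def by simp
  have "ereal e \<in> A'"
    unfolding A'_def
  proof (safe)
    show "0 \<le> ereal e" using epos by simp
    fix s :: real assume s: "0 \<le> s" "ereal s \<le> ereal e"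
    have "?N (\<lambda>i j. P s i j - P 0 i j) = s * \<beta>" using Ndist[where s=0 and t=s] s unfolding \<beta>_def by simp
    also have "\<dots> \<le> e * \<beta>" using s bnn by (intro mult_right_mono) auto
    finally show "P s \<in> D' (n+n)" using hep Pvm eb by auto
  qed
  hence eS': "ereal e \<le> Sup A'" by (rule Sup_upper)
  have "A' \<subseteq> A" using sub n2 unfolding A'_def A_def by blast
  hence S'S: "Sup A' \<le> Sup A" by (rule Sup_subset_mono)
  have inD': "P s \<in> D' (n+n)" if s0: "0 \<le> s" and sA: "ereal s < Sup A'" for s
  proof -
    obtain t where "t \<in> A'" "ereal s < t" using sA by (auto simp: less_Sup_iff)
    thus ?thesis using s0 unfolding A'_def by auto
  qed
  have bnd: "s * \<beta> \<le> 2 * M" if "0 \<le> s" "ereal s < Sup A'" for s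
  proof -
    have "s * \<beta> = ?N (\<lambda>i j. P s i j - P 0 i j)" using Ndist[where s=0 and t=s] that unfolding \<beta>_def by simp
    also have "\<dots> \<le> ?N (P s) + ?N (P 0)" by (rule os_diff[OF op n2 Pvm Pvm])
    also have "\<dots> \<le> M + M" using hM n2 inD'[OF that] P0 by (intro add_mono) auto
    finally show ?thesis by simp
  qed
  define k where "k = 2*M/(2*M+\<mu>)"
  have kpos: "k > 0" unfolding k_def using Mpos mu by simp
  show ?thesis
  proof (cases "Sup A' = \<infinity>")
    case True
    hence "Sup A = \<infinity>" using S'S by simp
    thus ?thesis using True dt dt' unfolding k_def[symmetric] by simp
  next
    case False
    obtain \<sigma> where sig: "Sup A' = ereal \<sigma>"
      using False eS' by (cases "Sup A'") auto
    have sigpos: "\<sigma> > 0" using eS' epos sig by simp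
    have sb: "\<sigma> * \<beta> \<le> 2 * M"
    proof (rule ccontr)
      assume "\<not> ?thesis"
      hence h: "\<sigma> * \<beta> > 2 * M" by simp
      have bpos: "\<beta> > 0"
      proof (rule ccontr)
        assume "\<not> \<beta> > 0" hence "\<beta> = 0" using bnn by simp
        thus False using h Mpos by simp
      qed
      define r where "r = (2*M/\<beta> + \<sigma>)/2"
      have "2*M/\<beta> < \<sigma>" using h bpos by (simp add: divide_less_eq mult.commute)
      hence r1: "r < \<sigma>" and r2: "r > 2*M/\<beta>" unfolding r_def by auto
      have "2*M/\<beta> \<ge> 0" using Mpos bpos by simp
      hence r0: "r \<ge> 0" using r2 by simp
      have "r * \<beta> > 2*M" using r2 bpos by (simp add: divide_less_eq)
      moreover have "r * \<beta> \<le> 2*M" using bnd[OF r0] r1 sig by simp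
      ultimately show False by simp
    qed
    define T where "T = \<sigma> + \<sigma>*\<mu>/(2*M)"
    have inA: "ereal t \<in> A" if t: "0 \<le> t" "t < T" for t
      unfolding A_def
    proof (safe)
      show "0 \<le> ereal t" using t by simp
      fix s :: real assume s: "0 \<le> s" "ereal s \<le> ereal t"
      show "P s \<in> D (n+n)"
      proof (cases "s < \<sigma>")
        case True
        thus ?thesis using inD'[OF s(1)] sig sub n2 by auto
      next
        case False
        show ?thesis
        proof (rule ccontr)
          assume nD: "P s \<notin> D (n+n)"
          have key: "\<mu> \<le> (s - r) * \<beta>" if r: "0 \<le> r" "r < \<sigma>" for r
          proof -
            have "P r \<in> D' (n+n)" using inD'[OF r(1)] r sig by simp
            hence "\<mu> \<le> ?N (\<lambda>i j. P r i j - P s i j)" using hmu n2 nD Pvm by blast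
            also have "\<dots> = (s - r) * \<beta>" using Ndist[where s=s and t=r] r False unfolding \<beta>_def by simp
            finally show ?thesis .
          qed
          have bpos: "\<beta> > 0"
          proof (rule ccontr)
            assume "\<not> \<beta> > 0" hence "\<beta> = 0" using bnn by simp
            thus False using key[of 0] sigpos mu by simp
          qed
          have k2: "\<mu> \<le> (s - \<sigma>) * \<beta>"
          proof (rule ccontr)
            assume "\<not> ?thesis"
            hence h: "(s - \<sigma>) * \<beta> < \<mu>" by simp
            define \<delta> where "\<delta> = (\<mu> - (s - \<sigma>) * \<beta>) / (2 * \<beta>)"
            have dpos: "\<delta> > 0" unfolding \<delta>_def using h bpos by simp
            define r where "r = max 0 (\<sigma> - \<delta>)"
            have r0: "0 \<le> r" and r1: "r < \<sigma>" unfolding r_def using dpos sigpos by auto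
            have "(s - r) * \<beta> \<le> (s - \<sigma> + \<delta>) * \<beta>" unfolding r_def using bpos
              by (intro mult_right_mono) auto
            also have "\<dots> = (s - \<sigma>) * \<beta> + (\<mu> - (s - \<sigma>) * \<beta>) / 2"
              unfolding \<delta>_def using bpos by (simp add: field_simps)
            also have "\<dots> < \<mu>" by (rule half_aux[OF h])
            finally show False using key[OF r0 r1] by simp
          qed
          have "s - \<sigma> < \<sigma>*\<mu>/(2*M)" using s t unfolding T_def by simp
          hence "(s - \<sigma>) * \<beta> < (\<sigma>*\<mu>/(2*M)) * \<beta>" by (rule mult_strict_right_mono[OF _ bpos])
          also have "\<dots> = \<mu> * ((\<sigma> * \<beta>) / (2*M))" by simp
          also have "\<dots> \<le> \<mu> * 1" using sb Mpos mu by (intro mult_left_mono) auto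
          finally show False using k2 by simp
        qed
      qed
    qed
    have Tpos: "T > 0" unfolding T_def using sigpos mu Mpos by (simp add: add_pos_nonneg)
    have TS: "ereal T \<le> Sup A"
    proof (rule ccontr)
      assume "\<not> ?thesis"
      hence lt: "Sup A < ereal T" by simp
      have ge: "ereal \<sigma> \<le> Sup A" using S'S sig by simp
      then obtain r where r: "Sup A = ereal r" using lt by (cases "Sup A") auto
      have "r < T" "\<sigma> \<le> r" using lt ge r by auto
      hence "ereal ((r+T)/2) \<in> A" using sigpos by (intro inA) auto
      hence "ereal ((r+T)/2) \<le> Sup A" by (rule Sup_upper)
      thus False using r \<open>r < T\<close> by simp
    qed
    have lhs: "ereal k * nc_delta_tilde D' n a c = ereal (k / \<sigma>)"
      using dt' sig sigpos by simp
    have kT: "k / \<sigma> = 1 / T"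
      unfolding k_def T_def using sigpos Mpos mu by (simp add: field_simps)
    show ?thesis
    proof (cases "Sup A = \<infinity>")
      case True
      thus ?thesis using dt lhs kpos sigpos unfolding k_def[symmetric] by simp
    next
      case F2: False
      obtain r where r: "Sup A = ereal r" using F2 TS Tpos by (cases "Sup A") auto
      have rT: "T \<le> r" using TS r by simp
      have "1 / r \<le> 1 / T" using rT Tpos by (intro divide_left_mono) auto
      thus ?thesis using dt r lhs kT Tpos rT unfolding k_def[symmetric] by simp
    qed
  qed
qed

theorem proposition5p3:
  fixes J :: "'v::real_vector \<Rightarrow> 'v"
    and nm :: "nat \<Rightarrow> 'v vmat \<Rightarrow> real"
    and D D' :: "nat \<Rightarrow> 'v vmat set"
  assumes "operator_space J nm"
    and "nc_domain nm D" and "nc_domain nm D'"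
    and "\<forall>n\<ge>1. D' n \<subseteq> D n"
    and "\<exists>M. \<forall>n\<ge>1. \<forall>x\<in>D' n. nm n x \<le> M"
    and "\<exists>\<mu>>0. \<forall>n\<ge>1. \<forall>x\<in>D' n. \<forall>w\<in>vmats n n - D n. \<mu> \<le> nm n (\<lambda>i j. x i j - w i j)"
  shows "\<exists>k::real. 0 \<le> k \<and> k < 1 \<and>
           (\<forall>n\<ge>1. \<forall>a\<in>D' n. \<forall>c\<in>D' n.
              ereal k * nc_delta_tilde D' n a c \<ge> nc_delta_tilde D n a c)"
proof -
  obtain M0 where M0: "\<forall>n\<ge>1. \<forall>x\<in>D' n. nm n x \<le> M0" using assms(5) by blast
  define M where "M = max M0 1"
  have M: "\<forall>n\<ge>1. \<forall>x\<in>D' n. nm n x \<le> M" using M0 unfolding M_def by force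
  have Mpos: "M > 0" unfolding M_def by simp
  obtain \<mu> where mu: "\<mu> > 0" and hmu: "\<forall>n\<ge>1. \<forall>x\<in>D' n. \<forall>w\<in>vmats n n - D n. \<mu> \<le> nm n (\<lambda>i j. x i j - w i j)"
    using assms(6) by blast
  show ?thesis
  proof (intro exI[of _ "2*M/(2*M+\<mu>)"] conjI allI impI ballI)
    show "0 \<le> 2*M/(2*M+\<mu>)" using Mpos mu by simp
    show "2*M/(2*M+\<mu>) < 1" using Mpos mu by simp
    fix n a c assume "1 \<le> n" "a \<in> D' n" "c \<in> D' n"
    thus "nc_delta_tilde D n a c \<le> ereal (2*M/(2*M+\<mu>)) * nc_delta_tilde D' n a c"
      using main_step[OF assms(1-4) M Mpos mu hmu] by blast
  qed
qed

end
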